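(* For all integers $a,d\ge1$, the distributive lattice $J(P_{a,1,1,d})$ is tCDE with edge density $\mathbb{E}(\mathrm{uni}_{J(P_{a,1,1,d})};\mathrm{ddeg})=1$.
   Context: $P_{a,1,1,d}$ is the poset on elements $w_1,\ldots,w_a,x_1,y_1,z_1,\ldots,z_d$ whose cover relations are $w_1\lessdot w_2\lessdot\cdots\lessdot w_a$, $w_a\lessdot x_1$, $w_a\lessdot y_1$, $x_1\lessdot z_1$, $y_1\lessdot z_1$, $z_1\lessdot z_2\lessdot\cdots\lessdot z_d$. $J(P)$ is the lattice of order ideals of $P$ ordered by inclusion; $\mathrm{ddeg}$ is the number of covered elements; $\mathrm{uni}$ is uniform. $\mathcal{T}^+_p(I)=1$ iff $p\notin I$ and $p$ is minimal in $P\setminus I$; $\mathcal{T}^-_p(I)=1$ iff $p\in I$ and $p$ is maximal in $I$ (else $0$). $\mu$ on $J(P)$ is toggle-symmetric if $\mathbb{E}(\mu;\mathcal{T}^+_p)=\mathbb{E}(\mu;\mathcal{T}^-_p)$ for all $p$; $J(P)$ is tCDE if $\mathbb{E}(\mu;\mathrm{ddeg})=\mathbb{E}(\mathrm{uni}_{J(P)};\mathrm{ddeg})$ for every toggle-symmetric $\mu$. *)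

theory Defs
  imports Complex_Main
begin

text \<open>A finite poset is given by a carrier set Pc and an order relation le
  (only its restriction to Pc matters).\<close>

definition order_ideals :: "'a set \<Rightarrow> ('a \<Rightarrow> 'a \<Rightarrow> bool) \<Rightarrow> 'a set set" where
  "order_ideals Pc le = {I. I \<subseteq> Pc \<and> (\<forall>x\<in>I. \<forall>y\<in>Pc. le y x \<longrightarrow> y \<in> I)}"

definition J_covers :: "'a set \<Rightarrow> ('a \<Rightarrow> 'a \<Rightarrow> bool) \<Rightarrow> 'a set \<Rightarrow> 'a set \<Rightarrow> bool" where
  "J_covers Pc le K I \<longleftrightarrow> K \<in> order_ideals Pc le \<and> I \<in> order_ideals Pc le \<and> K \<subset> I \<and>
     \<not> (\<exists>L\<in>order_ideals Pc le. K \<subset> L \<and> L \<subset> I)"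

definition ddeg :: "'a set \<Rightarrow> ('a \<Rightarrow> 'a \<Rightarrow> bool) \<Rightarrow> 'a set \<Rightarrow> real" where
  "ddeg Pc le I = real (card {K. J_covers Pc le K I})"

definition toggle_plus :: "'a set \<Rightarrow> ('a \<Rightarrow> 'a \<Rightarrow> bool) \<Rightarrow> 'a \<Rightarrow> 'a set \<Rightarrow> real" where
  "toggle_plus Pc le p I =
     (if p \<in> Pc - I \<and> (\<forall>q\<in>Pc - I. le q p \<longrightarrow> q = p) then 1 else 0)"

definition toggle_minus :: "'a set \<Rightarrow> ('a \<Rightarrow> 'a \<Rightarrow> bool) \<Rightarrow> 'a \<Rightarrow> 'a set \<Rightarrow> real" where
  "toggle_minus Pc le p I =
     (if p \<in> I \<and> (\<forall>q\<in>I. le p q \<longrightarrow> q = p) then 1 else 0)"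

definition is_distribution :: "'a set \<Rightarrow> ('a \<Rightarrow> 'a \<Rightarrow> bool) \<Rightarrow> ('a set \<Rightarrow> real) \<Rightarrow> bool" where
  "is_distribution Pc le \<mu> \<longleftrightarrow>
     (\<forall>I\<in>order_ideals Pc le. 0 \<le> \<mu> I) \<and> (\<Sum>I\<in>order_ideals Pc le. \<mu> I) = 1"

definition expect :: "'a set \<Rightarrow> ('a \<Rightarrow> 'a \<Rightarrow> bool) \<Rightarrow> ('a set \<Rightarrow> real) \<Rightarrow> ('a set \<Rightarrow> real) \<Rightarrow> real" where
  "expect Pc le \<mu> f = (\<Sum>I\<in>order_ideals Pc le. \<mu> I * f I)"

definition uni :: "'a set \<Rightarrow> ('a \<Rightarrow> 'a \<Rightarrow> bool) \<Rightarrow> 'a set \<Rightarrow> real" where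
  "uni Pc le I = (if I \<in> order_ideals Pc le then 1 / real (card (order_ideals Pc le)) else 0)"

definition toggle_symmetric :: "'a set \<Rightarrow> ('a \<Rightarrow> 'a \<Rightarrow> bool) \<Rightarrow> ('a set \<Rightarrow> real) \<Rightarrow> bool" where
  "toggle_symmetric Pc le \<mu> \<longleftrightarrow>
     (\<forall>p\<in>Pc. expect Pc le \<mu> (toggle_plus Pc le p) = expect Pc le \<mu> (toggle_minus Pc le p))"

definition tCDE :: "'a set \<Rightarrow> ('a \<Rightarrow> 'a \<Rightarrow> bool) \<Rightarrow> bool" where
  "tCDE Pc le \<longleftrightarrow>
     (\<forall>\<mu>. is_distribution Pc le \<mu> \<and> toggle_symmetric Pc le \<mu> \<longrightarrow>
        expect Pc le \<mu> (ddeg Pc le) = expect Pc le (uni Pc le) (ddeg Pc le))"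

datatype pelem = W nat | X | Y | Z nat

definition P_carrier :: "nat \<Rightarrow> nat \<Rightarrow> pelem set" where
  "P_carrier a d = W ` {1..a} \<union> {X, Y} \<union> Z ` {1..d}"

definition P_cover :: "nat \<Rightarrow> nat \<Rightarrow> (pelem \<times> pelem) set" where
  "P_cover a d = {(W i, W (Suc i)) | i. 1 \<le> i \<and> i < a}
     \<union> {(W a, X), (W a, Y), (X, Z 1), (Y, Z 1)}
     \<union> {(Z j, Z (Suc j)) | j. 1 \<le> j \<and> j < d}"

definition P_le :: "nat \<Rightarrow> nat \<Rightarrow> pelem \<Rightarrow> pelem \<Rightarrow> bool" where
  "P_le a d x y \<longleftrightarrow> (x, y) \<in> (P_cover a d)\<^sup>*"

end

theory Submission
  imports Defs
begin


definition Rel :: "nat \<Rightarrow> nat \<Rightarrow> pelem \<Rightarrow> pelem \<Rightarrow> bool" where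
"Rel a d x y \<longleftrightarrow> x = y \<or> (case x of
   W i \<Rightarrow> 1 \<le> i \<and> i \<le> a \<and> (case y of W j \<Rightarrow> i < j \<and> j \<le> a | X \<Rightarrow> True | Y \<Rightarrow> True | Z j \<Rightarrow> 1 \<le> j \<and> j \<le> d)
 | X \<Rightarrow> (case y of Z j \<Rightarrow> 1 \<le> j \<and> j \<le> d | _ \<Rightarrow> False)
 | Y \<Rightarrow> (case y of Z j \<Rightarrow> 1 \<le> j \<and> j \<le> d | _ \<Rightarrow> False)
 | Z i \<Rightarrow> (case y of Z j \<Rightarrow> 1 \<le> i \<and> i < j \<and> j \<le> d | _ \<Rightarrow> False))"

lemma rt_Rel:
  assumes "a \<ge> 1" "d \<ge> 1" "(x,y) \<in> (P_cover a d)\<^sup>*"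
  shows "Rel a d x y"
  using assms(3)
proof (induction rule: rtrancl_induct)
  case base then show ?case by (simp add: Rel_def)
next
  case (step y z)
  from step(2) consider (ww) i where "y = W i" "z = W (Suc i)" "1 \<le> i" "i < a"
    | (wx) "y = W a" "z = X" | (wy) "y = W a" "z = Y" | (xz) "y = X" "z = Z 1" | (yz) "y = Y" "z = Z 1"
    | (zz) j where "y = Z j" "z = Z (Suc j)" "1 \<le> j" "j < d"
    unfolding P_cover_def by blast
  then show ?case
  proof cases
    case ww then show ?thesis using step(3) by (cases x) (auto simp: Rel_def)
  next
    case wx then show ?thesis using step(3) assms by (cases x) (auto simp: Rel_def)
  next
    case wy then show ?thesis using step(3) assms by (cases x) (auto simp: Rel_def)
  next
    case xz then show ?thesis using step(3) assms by (cases x) (auto simp: Rel_def)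
  next
    case yz then show ?thesis using step(3) assms by (cases x) (auto simp: Rel_def)
  next
    case zz then show ?thesis using step(3) assms by (cases x) (auto simp: Rel_def)
  qed
qed

lemma W_chain: "1 \<le> i \<Longrightarrow> i \<le> j \<Longrightarrow> j \<le> a \<Longrightarrow> (W i, W j) \<in> (P_cover a d)\<^sup>*"
proof (induction j)
  case 0 then show ?case by simp
next
  case (Suc j)
  show ?case
  proof (cases "i = Suc j")
    case True then show ?thesis by simp
  next
    case False
    then have "(W i, W j) \<in> (P_cover a d)\<^sup>*" using Suc by simp
    moreover have "(W j, W (Suc j)) \<in> P_cover a d" using Suc False by (auto simp: P_cover_def)
    ultimately show ?thesis by (rule rtrancl_into_rtrancl)
  qed
qed

lemma Z_chain: "1 \<le> i \<Longrightarrow> i \<le> j \<Longrightarrow> j \<le> d \<Longrightarrow> (Z i, Z j) \<in> (P_cover a d)\<^sup>*"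
proof (induction j)
  case 0 then show ?case by simp
next
  case (Suc j)
  show ?case
  proof (cases "i = Suc j")
    case True then show ?thesis by simp
  next
    case False
    then have "(Z i, Z j) \<in> (P_cover a d)\<^sup>*" using Suc by simp
    moreover have "(Z j, Z (Suc j)) \<in> P_cover a d" using Suc False by (auto simp: P_cover_def)
    ultimately show ?thesis by (rule rtrancl_into_rtrancl)
  qed
qed

lemma Rel_rt:
  assumes "a \<ge> 1" "d \<ge> 1" "Rel a d x y"
  shows "(x,y) \<in> (P_cover a d)\<^sup>*"
proof -
  have WX: "(W i, X) \<in> (P_cover a d)\<^sup>*" if "1 \<le> i" "i \<le> a" for i
    proof (rule rtrancl_into_rtrancl[of _ "W a"])
      show "(W i, W a) \<in> (P_cover a d)\<^sup>*" using W_chain[of i a a d] that by simp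
    qed (auto simp: P_cover_def)
  have WY: "(W i, Y) \<in> (P_cover a d)\<^sup>*" if "1 \<le> i" "i \<le> a" for i
    proof (rule rtrancl_into_rtrancl[of _ "W a"])
      show "(W i, W a) \<in> (P_cover a d)\<^sup>*" using W_chain[of i a a d] that by simp
    qed (auto simp: P_cover_def)
  have XZ: "(X, Z j) \<in> (P_cover a d)\<^sup>*" if "1 \<le> j" "j \<le> d" for j
    proof (rule converse_rtrancl_into_rtrancl[of _ "Z 1"])
      show "(Z 1, Z j) \<in> (P_cover a d)\<^sup>*" using Z_chain[of 1 j d a] that by simp
    qed (auto simp: P_cover_def)
  have YZ: "(Y, Z j) \<in> (P_cover a d)\<^sup>*" if "1 \<le> j" "j \<le> d" for j
    proof (rule converse_rtrancl_into_rtrancl[of _ "Z 1"])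
      show "(Z 1, Z j) \<in> (P_cover a d)\<^sup>*" using Z_chain[of 1 j d a] that by simp
    qed (auto simp: P_cover_def)
  have WZ: "(W i, Z j) \<in> (P_cover a d)\<^sup>*" if "1 \<le> i" "i \<le> a" "1 \<le> j" "j \<le> d" for i j
    using WX[OF that(1,2)] XZ[OF that(3,4)] by (rule rtrancl_trans)
  show ?thesis
  proof (cases x)
    case (W i) then show ?thesis
    proof (cases y)
      case (W j) then show ?thesis using \<open>x = W i\<close> assms(3) W_chain[of i j a d]
        by (auto simp: Rel_def)
    next
      case X then show ?thesis using \<open>x = W i\<close> assms(3) WX[of i] by (simp add: Rel_def)
    next
      case Y then show ?thesis using \<open>x = W i\<close> assms(3) WY[of i] by (simp add: Rel_def)
    next
      case (Z j) then show ?thesis using \<open>x = W i\<close> assms(3) WZ[of i j] by (simp add: Rel_def)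
    qed
  next
    case X then show ?thesis using assms(3) XZ by (cases y) (simp_all add: Rel_def)
  next
    case Y then show ?thesis using assms(3) YZ by (cases y) (simp_all add: Rel_def)
  next
    case (Z i) then show ?thesis
    proof (cases y)
      case (Z j) then show ?thesis using \<open>x = Z i\<close> assms(3) Z_chain[of i j d a]
        by (auto simp: Rel_def)
    qed (use assms(3) in \<open>simp_all add: Rel_def\<close>)
  qed
qed

lemma P_le_iff: "a \<ge> 1 \<Longrightarrow> d \<ge> 1 \<Longrightarrow> P_le a d x y \<longleftrightarrow> Rel a d x y"
  unfolding P_le_def using rt_Rel Rel_rt by blast




definition Ws :: "nat \<Rightarrow> pelem set" where "Ws k = W ` {1..k}"
definition Bx :: "nat \<Rightarrow> pelem set" where "Bx a = W ` {1..a} \<union> {X}"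
definition By :: "nat \<Rightarrow> pelem set" where "By a = W ` {1..a} \<union> {Y}"
definition Ds :: "nat \<Rightarrow> nat \<Rightarrow> pelem set" where "Ds a j = W ` {1..a} \<union> {X, Y} \<union> Z ` {1..j}"

lemma mem_Pc[simp]:
  "W i \<in> P_carrier a d \<longleftrightarrow> 1 \<le> i \<and> i \<le> a"
  "X \<in> P_carrier a d" "Y \<in> P_carrier a d"
  "Z j \<in> P_carrier a d \<longleftrightarrow> 1 \<le> j \<and> j \<le> d"
  by (auto simp: P_carrier_def)

lemma mem_sets[simp]:
  "W i \<in> Ws k \<longleftrightarrow> 1 \<le> i \<and> i \<le> k" "X \<notin> Ws k" "Y \<notin> Ws k" "Z j \<notin> Ws k"
  "W i \<in> Bx a \<longleftrightarrow> 1 \<le> i \<and> i \<le> a" "X \<in> Bx a" "Y \<notin> Bx a" "Z j \<notin> Bx a"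
  "W i \<in> By a \<longleftrightarrow> 1 \<le> i \<and> i \<le> a" "X \<notin> By a" "Y \<in> By a" "Z j \<notin> By a"
  "W i \<in> Ds a m \<longleftrightarrow> 1 \<le> i \<and> i \<le> a" "X \<in> Ds a m" "Y \<in> Ds a m"
  "Z j \<in> Ds a m \<longleftrightarrow> 1 \<le> j \<and> j \<le> m"
  by (auto simp: Ws_def Bx_def By_def Ds_def)

lemma down_interval:
  fixes n :: nat shows "S \<subseteq> {1..n} \<Longrightarrow> (\<forall>i\<in>S. \<forall>i'. 1 \<le> i' \<longrightarrow> i' \<le> i \<longrightarrow> i' \<in> S) \<Longrightarrow> \<exists>k\<le>n. S = {1..k}"
proof (induction n rule: nat.induct)
  case zero then show ?case by auto
next
  case (Suc n)
  show ?case
  proof (cases "Suc n \<in> S")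
    case True
    then have "S = {1..Suc n}" using Suc.prems by auto
    then show ?thesis by blast
  next
    case False
    then have "S \<subseteq> {1..n}" using Suc.prems(1) by (auto simp: le_Suc_eq)
    then obtain k where "k \<le> n" "S = {1..k}" using Suc.IH Suc.prems(2) by blast
    then show ?thesis by (intro exI[of _ k]) auto
  qed
qed

lemma pelem_set_eq: "(\<And>i. W i \<in> A \<longleftrightarrow> W i \<in> B) \<Longrightarrow> (X \<in> A \<longleftrightarrow> X \<in> B) \<Longrightarrow> (Y \<in> A \<longleftrightarrow> Y \<in> B)
   \<Longrightarrow> (\<And>j. Z j \<in> A \<longleftrightarrow> Z j \<in> B) \<Longrightarrow> A = B"
  by (metis pelem.exhaust subsetI subset_antisym)

lemma ideals_eq:
  assumes a: "a \<ge> 1" and d: "d \<ge> 1"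
  shows "order_ideals (P_carrier a d) (P_le a d) = Ws ` {0..a} \<union> {Bx a, By a} \<union> Ds a ` {0..d}"
proof
  show "Ws ` {0..a} \<union> {Bx a, By a} \<union> Ds a ` {0..d} \<subseteq> order_ideals (P_carrier a d) (P_le a d)"
  proof -
    have "Ws k \<in> order_ideals (P_carrier a d) (P_le a d)" if "k \<le> a" for k
      unfolding order_ideals_def P_le_iff[OF a d]
    proof (intro CollectI conjI ballI impI subsetI)
      fix x assume "x \<in> Ws k" then show "x \<in> P_carrier a d" using that by (cases x) auto
    next
      fix x y assume "x \<in> Ws k" "y \<in> P_carrier a d" "Rel a d y x"
      then show "y \<in> Ws k" by (cases x; cases y) (auto simp: Rel_def)
    qed
    moreover have "Bx a \<in> order_ideals (P_carrier a d) (P_le a d)"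
      unfolding order_ideals_def P_le_iff[OF a d]
    proof (intro CollectI conjI ballI impI subsetI)
      fix x assume "x \<in> Bx a" then show "x \<in> P_carrier a d" by (cases x) auto
    next
      fix x y assume "x \<in> Bx a" "y \<in> P_carrier a d" "Rel a d y x"
      then show "y \<in> Bx a" by (cases x; cases y) (auto simp: Rel_def)
    qed
    moreover have "By a \<in> order_ideals (P_carrier a d) (P_le a d)"
      unfolding order_ideals_def P_le_iff[OF a d]
    proof (intro CollectI conjI ballI impI subsetI)
      fix x assume "x \<in> By a" then show "x \<in> P_carrier a d" by (cases x) auto
    next
      fix x y assume "x \<in> By a" "y \<in> P_carrier a d" "Rel a d y x"
      then show "y \<in> By a" by (cases x; cases y) (auto simp: Rel_def)
    qed
    moreover have "Ds a j \<in> order_ideals (P_carrier a d) (P_le a d)" if "j \<le> d" for j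
      unfolding order_ideals_def P_le_iff[OF a d]
    proof (intro CollectI conjI ballI impI subsetI)
      fix x assume "x \<in> Ds a j" then show "x \<in> P_carrier a d" using that by (cases x) auto
    next
      fix x y assume "x \<in> Ds a j" "y \<in> P_carrier a d" "Rel a d y x"
      then show "y \<in> Ds a j" by (cases x; cases y) (auto simp: Rel_def)
    qed
    ultimately show ?thesis by auto
  qed
next
  show "order_ideals (P_carrier a d) (P_le a d) \<subseteq> Ws ` {0..a} \<union> {Bx a, By a} \<union> Ds a ` {0..d}"
  proof
    fix I assume "I \<in> order_ideals (P_carrier a d) (P_le a d)"
    then have sub: "I \<subseteq> P_carrier a d"
      and down: "\<And>x y. x \<in> I \<Longrightarrow> y \<in> P_carrier a d \<Longrightarrow> Rel a d y x \<Longrightarrow> y \<in> I"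
      unfolding order_ideals_def P_le_iff[OF a d] by auto
    define K where "K = {i. W i \<in> I}"
    define J where "J = {j. Z j \<in> I}"
    have "K \<subseteq> {1..a}" using sub unfolding K_def by auto
    moreover have "\<forall>i\<in>K. \<forall>i'. 1 \<le> i' \<longrightarrow> i' \<le> i \<longrightarrow> i' \<in> K"
    proof (intro ballI allI impI)
      fix i i' assume "i \<in> K" "1 \<le> i'" "i' \<le> i"
      then have "W i \<in> I" "i \<le> a" using sub unfolding K_def by auto
      then show "i' \<in> K" using down[of "W i" "W i'"] \<open>1 \<le> i'\<close> \<open>i' \<le> i\<close>
        unfolding K_def by (cases "i' = i") (auto simp: Rel_def)
    qed
    ultimately obtain k where k: "k \<le> a" "K = {1..k}" using down_interval by blast
    have "J \<subseteq> {1..d}" using sub unfolding J_def by auto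
    moreover have "\<forall>i\<in>J. \<forall>i'. 1 \<le> i' \<longrightarrow> i' \<le> i \<longrightarrow> i' \<in> J"
    proof (intro ballI allI impI)
      fix i i' assume "i \<in> J" "1 \<le> i'" "i' \<le> i"
      then have "Z i \<in> I" "i \<le> d" using sub unfolding J_def by auto
      then show "i' \<in> J" using down[of "Z i" "Z i'"] \<open>1 \<le> i'\<close> \<open>i' \<le> i\<close>
        unfolding J_def by (cases "i' = i") (auto simp: Rel_def)
    qed
    ultimately obtain j where j: "j \<le> d" "J = {1..j}" using down_interval by blast
    have WI: "W i \<in> I \<longleftrightarrow> 1 \<le> i \<and> i \<le> k" for i using k unfolding K_def by (metis (mono_tags) atLeastAtMost_iff mem_Collect_eq)
    have ZI: "Z i \<in> I \<longleftrightarrow> 1 \<le> i \<and> i \<le> j" for i using j unfolding J_def by (metis (mono_tags) atLeastAtMost_iff mem_Collect_eq)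
    have ZX: "X \<in> I" if "Z i \<in> I" for i
      using down[of "Z i" X] that sub by (auto simp: Rel_def)
    have ZY: "Y \<in> I" if "Z i \<in> I" for i
      using down[of "Z i" Y] that sub by (auto simp: Rel_def)
    have XW: "k = a" if "X \<in> I"
    proof -
      have "W a \<in> I" using down[of X "W a"] that a by (auto simp: Rel_def)
      then show ?thesis using WI k by auto
    qed
    have YW: "k = a" if "Y \<in> I"
    proof -
      have "W a \<in> I" using down[of Y "W a"] that a by (auto simp: Rel_def)
      then show ?thesis using WI k by auto
    qed
    show "I \<in> Ws ` {0..a} \<union> {Bx a, By a} \<union> Ds a ` {0..d}"
    proof (cases "X \<in> I"; cases "Y \<in> I")
      assume "X \<in> I" "Y \<in> I"
      then have "I = Ds a j" using XW WI ZI by (intro pelem_set_eq) auto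
      then show ?thesis using j by auto
    next
      assume "X \<in> I" "Y \<notin> I"
      then have "I = Bx a" using XW WI ZI ZY by (intro pelem_set_eq) auto
      then show ?thesis by auto
    next
      assume "X \<notin> I" "Y \<in> I"
      then have "I = By a" using YW WI ZI ZX by (intro pelem_set_eq) auto
      then show ?thesis by auto
    next
      assume "X \<notin> I" "Y \<notin> I"
      then have "I = Ws k" using WI ZI ZX by (intro pelem_set_eq) auto
      then show ?thesis using k by auto
    qed
  qed
qed




lemma remove_max_ideal:
  assumes "I \<in> order_ideals Pc le" "p \<in> I" "\<forall>q\<in>I. le p q \<longrightarrow> q = p"
  shows "I - {p} \<in> order_ideals Pc le"
  using assms unfolding order_ideals_def by blast

lemma ddeg_max:
  fixes rk :: "'a \<Rightarrow> nat"
  assumes fin: "finite Pc" and rk: "\<And>x y. le x y \<Longrightarrow> x \<noteq> y \<Longrightarrow> rk x < rk y"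
    and I: "I \<in> order_ideals Pc le"
  shows "ddeg Pc le I = real (card {p\<in>I. \<forall>q\<in>I. le p q \<longrightarrow> q = p})"
proof -
  let ?M = "{p\<in>I. \<forall>q\<in>I. le p q \<longrightarrow> q = p}"
  have IPc: "I \<subseteq> Pc" using I unfolding order_ideals_def by auto
  have "{K. J_covers Pc le K I} = (\<lambda>p. I - {p}) ` ?M"
  proof
    show "{K. J_covers Pc le K I} \<subseteq> (\<lambda>p. I - {p}) ` ?M"
    proof
      fix K assume "K \<in> {K. J_covers Pc le K I}"
      then have K: "K \<in> order_ideals Pc le" "K \<subset> I"
        and nb: "\<not> (\<exists>L\<in>order_ideals Pc le. K \<subset> L \<and> L \<subset> I)"
        unfolding J_covers_def by auto
      have fin2: "finite (I - K)" using fin IPc finite_subset by blast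
      have ne: "I - K \<noteq> {}" using K by auto
      have "Max (rk ` (I - K)) \<in> rk ` (I - K)" using fin2 ne by (intro Max_in) auto
      then obtain p where p: "p \<in> I - K" "rk p = Max (rk ` (I - K))" by (metis imageE)
      have pmax: "\<forall>q\<in>I. le p q \<longrightarrow> q = p"
      proof (intro ballI impI)
        fix q assume q: "q \<in> I" "le p q"
        show "q = p"
        proof (rule ccontr)
          assume "q \<noteq> p"
          then have "rk p < rk q" using rk q(2) by auto
          moreover have "q \<notin> K"
          proof
            assume "q \<in> K"
            then have "p \<in> K" using K(1) p(1) IPc q(2) unfolding order_ideals_def by auto
            then show False using p(1) by auto
          qed
          then have "rk q \<le> Max (rk ` (I - K))" using q(1) fin2 by auto
          ultimately show False using p(2) by auto
        qed
      qed
      have "I - {p} \<in> order_ideals Pc le" using remove_max_ideal[OF I _ pmax] p by auto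
      moreover have "K \<subseteq> I - {p}" using K p by auto
      ultimately have "K = I - {p}" using nb p(1) by blast
      then show "K \<in> (\<lambda>p. I - {p}) ` ?M" using p(1) pmax by auto
    qed
  next
    show "(\<lambda>p. I - {p}) ` ?M \<subseteq> {K. J_covers Pc le K I}"
    proof
      fix K assume "K \<in> (\<lambda>p. I - {p}) ` ?M"
      then obtain p where p: "p \<in> I" "\<forall>q\<in>I. le p q \<longrightarrow> q = p" "K = I - {p}" by auto
      have "K \<in> order_ideals Pc le" using remove_max_ideal[OF I p(1,2)] p(3) by simp
      then show "K \<in> {K. J_covers Pc le K I}" unfolding J_covers_def using I p by blast
    qed
  qed
  moreover have "inj_on (\<lambda>p. I - {p}) ?M" by (auto simp: inj_on_def)
  ultimately show ?thesis unfolding ddeg_def by (simp add: card_image)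
qed

fun rk :: "nat \<Rightarrow> pelem \<Rightarrow> nat" where
  "rk a (W i) = i" | "rk a X = a + 1" | "rk a Y = a + 1" | "rk a (Z j) = a + 1 + j"

lemma rk_strict: "Rel a d x y \<Longrightarrow> x \<noteq> y \<Longrightarrow> rk a x < rk a y"
  by (cases x; cases y) (auto simp: Rel_def)

lemma fin_Pc: "finite (P_carrier a d)" by (simp add: P_carrier_def)

lemma ddeg_P:
  assumes a: "a \<ge> 1" and d: "d \<ge> 1" and I: "I \<in> order_ideals (P_carrier a d) (P_le a d)"
  shows "ddeg (P_carrier a d) (P_le a d) I = real (card {p\<in>I. \<forall>q\<in>I. Rel a d p q \<longrightarrow> q = p})"
  using ddeg_max[OF fin_Pc _ I, of "rk a"] rk_strict P_le_iff[OF a d] by simp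




lemma Ball_sets:
  "(\<forall>q\<in>Ws k. P q) \<longleftrightarrow> (\<forall>i. 1 \<le> i \<and> i \<le> k \<longrightarrow> P (W i))"
  "(\<forall>q\<in>Bx a. P q) \<longleftrightarrow> (\<forall>i. 1 \<le> i \<and> i \<le> a \<longrightarrow> P (W i)) \<and> P X"
  "(\<forall>q\<in>By a. P q) \<longleftrightarrow> (\<forall>i. 1 \<le> i \<and> i \<le> a \<longrightarrow> P (W i)) \<and> P Y"
  "(\<forall>q\<in>Ds a m. P q) \<longleftrightarrow> (\<forall>i. 1 \<le> i \<and> i \<le> a \<longrightarrow> P (W i)) \<and> P X \<and> P Y \<and> (\<forall>j. 1 \<le> j \<and> j \<le> m \<longrightarrow> P (Z j))"
  "(\<forall>q\<in>P_carrier a d - S. P q) \<longleftrightarrow> (\<forall>i. 1 \<le> i \<and> i \<le> a \<longrightarrow> W i \<notin> S \<longrightarrow> P (W i)) \<and> (X \<notin> S \<longrightarrow> P X)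
      \<and> (Y \<notin> S \<longrightarrow> P Y) \<and> (\<forall>j. 1 \<le> j \<and> j \<le> d \<longrightarrow> Z j \<notin> S \<longrightarrow> P (Z j))"
  by (auto simp: Ws_def Bx_def By_def Ds_def P_carrier_def)

lemma Ws_inj: "inj_on Ws A"
proof (rule inj_onI)
  fix k k' assume e: "Ws k = Ws k'"
  show "k = k'"
  proof (rule ccontr)
    assume "k \<noteq> k'"
    then consider "k < k'" | "k' < k" by linarith
    then show False
    proof cases
      case 1 then have "W k' \<in> Ws k'" "W k' \<notin> Ws k" by auto
      then show False using e by simp
    next
      case 2 then have "W k \<in> Ws k" "W k \<notin> Ws k'" by auto
      then show False using e by simp
    qed
  qed
qed

lemma Ds_inj: "inj_on (Ds a) A"
proof (rule inj_onI)
  fix k k' assume e: "Ds a k = Ds a k'"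
  show "k = k'"
  proof (rule ccontr)
    assume "k \<noteq> k'"
    then consider "k < k'" | "k' < k" by linarith
    then show False
    proof cases
      case 1 then have "Z k' \<in> Ds a k'" "Z k' \<notin> Ds a k" by auto
      then show False using e by simp
    next
      case 2 then have "Z k \<in> Ds a k" "Z k \<notin> Ds a k'" by auto
      then show False using e by simp
    qed
  qed
qed

lemma sum_ideals:
  assumes a: "a \<ge> 1" and d: "d \<ge> 1"
  shows "(\<Sum>I\<in>order_ideals (P_carrier a d) (P_le a d). g I) =
    (\<Sum>k=0..a. g (Ws k)) + g (Bx a) + g (By a) + (\<Sum>j=0..d. g (Ds a j))"
proof -
  have d1: "Ws ` {0..a} \<inter> {Bx a, By a} = {}"
    by (auto dest: arg_cong[where f="\<lambda>S. X \<in> S \<or> Y \<in> S"])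
  have d2: "(Ws ` {0..a} \<union> {Bx a, By a}) \<inter> Ds a ` {0..d} = {}"
    by (auto dest: arg_cong[where f="\<lambda>S. X \<in> S \<and> Y \<in> S"])
  have bxy: "Bx a \<noteq> By a" by (auto dest: arg_cong[where f="\<lambda>S. X \<in> S"])
  have d2': "Bx a \<notin> Ds a ` {0..d}" "By a \<notin> Ds a ` {0..d}" using d2 by auto
  have "(\<Sum>I\<in>Ws ` {0..a} \<union> {Bx a, By a} \<union> Ds a ` {0..d}. g I) =
     (\<Sum>I\<in>Ws ` {0..a} \<union> {Bx a, By a}. g I) + (\<Sum>I\<in>Ds a ` {0..d}. g I)"
    by (rule sum.union_disjoint) (use d2 in auto)
  also have "(\<Sum>I\<in>Ws ` {0..a} \<union> {Bx a, By a}. g I) = (\<Sum>I\<in>Ws ` {0..a}. g I) + (\<Sum>I\<in>{Bx a, By a}. g I)"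
    by (rule sum.union_disjoint) (use d1 in auto)
  also have "(\<Sum>I\<in>{Bx a, By a}. g I) = g (Bx a) + g (By a)" using bxy by simp
  also have "(\<Sum>I\<in>Ws ` {0..a}. g I) = (\<Sum>k=0..a. g (Ws k))" by (simp add: sum.reindex Ws_inj)
  also have "(\<Sum>I\<in>Ds a ` {0..d}. g I) = (\<Sum>j=0..d. g (Ds a j))" by (simp add: sum.reindex Ds_inj)
  finally show ?thesis unfolding ideals_eq[OF a d] by (simp add: add.assoc)
qed




context
  fixes a d :: nat
  assumes a: "a \<ge> 1" and d: "d \<ge> 1"
begin

abbreviation "Pc \<equiv> P_carrier a d"
abbreviation "le \<equiv> P_le a d"

lemma tpW:
  assumes "1 \<le> k" "k \<le> a"
  shows "i \<le> a \<Longrightarrow> toggle_plus Pc le (W k) (Ws i) = (if i = k - 1 then 1 else 0)"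
    "toggle_plus Pc le (W k) (Bx a) = 0"
    "toggle_plus Pc le (W k) (By a) = 0"
    "toggle_plus Pc le (W k) (Ds a j) = 0"
  using assms unfolding toggle_plus_def P_le_iff[OF a d] Ball_sets
  by (auto simp: Rel_def) (presburger+)?

lemma tmW:
  assumes "1 \<le> k" "k \<le> a"
  shows "i \<le> a \<Longrightarrow> toggle_minus Pc le (W k) (Ws i) = (if i = k then 1 else 0)"
    "toggle_minus Pc le (W k) (Bx a) = 0"
    "toggle_minus Pc le (W k) (By a) = 0"
    "toggle_minus Pc le (W k) (Ds a j) = 0"
  using assms unfolding toggle_minus_def P_le_iff[OF a d] Ball_sets
  by (auto simp: Rel_def) (presburger+)?

lemma tpX:
  shows "i \<le> a \<Longrightarrow> toggle_plus Pc le X (Ws i) = (if i = a then 1 else 0)"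
    "toggle_plus Pc le X (Bx a) = 0"
    "toggle_plus Pc le X (By a) = 1"
    "toggle_plus Pc le X (Ds a j) = 0"
    "i \<le> a \<Longrightarrow> toggle_plus Pc le Y (Ws i) = (if i = a then 1 else 0)"
    "toggle_plus Pc le Y (Bx a) = 1"
    "toggle_plus Pc le Y (By a) = 0"
    "toggle_plus Pc le Y (Ds a j) = 0"
  unfolding toggle_plus_def P_le_iff[OF a d] Ball_sets
  using a by (auto simp: Rel_def) (presburger+)?

lemma tmX:
  shows "toggle_minus Pc le X (Ws i) = 0"
    "toggle_minus Pc le X (Bx a) = 1"
    "toggle_minus Pc le X (By a) = 0"
    "j \<le> d \<Longrightarrow> toggle_minus Pc le X (Ds a j) = (if j = 0 then 1 else 0)"
    "toggle_minus Pc le Y (Ws i) = 0"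
    "toggle_minus Pc le Y (Bx a) = 0"
    "toggle_minus Pc le Y (By a) = 1"
    "j \<le> d \<Longrightarrow> toggle_minus Pc le Y (Ds a j) = (if j = 0 then 1 else 0)"
  unfolding toggle_minus_def P_le_iff[OF a d] Ball_sets
  using a by (auto simp: Rel_def) (presburger+)?


lemma ideal_mems:
  "i \<le> a \<Longrightarrow> Ws i \<in> order_ideals Pc le" "Bx a \<in> order_ideals Pc le"
  "By a \<in> order_ideals Pc le" "j \<le> d \<Longrightarrow> Ds a j \<in> order_ideals Pc le"
  unfolding ideals_eq[OF a d] by auto

lemma dd:
  "i \<le> a \<Longrightarrow> ddeg Pc le (Ws i) = (if i = 0 then 0 else 1)"
  "ddeg Pc le (Bx a) = 1" "ddeg Pc le (By a) = 1"
  "j \<le> d \<Longrightarrow> ddeg Pc le (Ds a j) = (if j = 0 then 2 else 1)"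
proof -
  assume i: "i \<le> a"
  have "{p\<in>Ws i. \<forall>q\<in>Ws i. Rel a d p q \<longrightarrow> q = p} = (if i = 0 then {} else {W i})"
    using i by (intro pelem_set_eq; auto simp: Ball_sets Rel_def; presburger)
  then show "ddeg Pc le (Ws i) = (if i = 0 then 0 else 1)"
    using ddeg_P[OF a d ideal_mems(1)[OF i]] by simp
next
  have "{p\<in>Bx a. \<forall>q\<in>Bx a. Rel a d p q \<longrightarrow> q = p} = {X}"
    by (intro pelem_set_eq) (auto simp: Ball_sets Rel_def)
  then show "ddeg Pc le (Bx a) = 1"
    using ddeg_P[OF a d ideal_mems(2)] by simp
next
  have "{p\<in>By a. \<forall>q\<in>By a. Rel a d p q \<longrightarrow> q = p} = {Y}"
    by (intro pelem_set_eq) (auto simp: Ball_sets Rel_def)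
  then show "ddeg Pc le (By a) = 1"
    using ddeg_P[OF a d ideal_mems(3)] by simp
next
  assume j: "j \<le> d"
  show "ddeg Pc le (Ds a j) = (if j = 0 then 2 else 1)"
  proof (cases "j = 0")
    case True
    have "{p\<in>Ds a j. \<forall>q\<in>Ds a j. Rel a d p q \<longrightarrow> q = p} = {X, Y}"
      using True by (intro pelem_set_eq) (auto simp: Ball_sets Rel_def)
    then show ?thesis using ddeg_P[OF a d ideal_mems(4)[OF j]] True by simp
  next
    case False
    have "{p\<in>Ds a j. \<forall>q\<in>Ds a j. Rel a d p q \<longrightarrow> q = p} = {Z j}"
      using False j by (intro pelem_set_eq; auto simp: Ball_sets Rel_def; presburger)
    then show ?thesis using ddeg_P[OF a d ideal_mems(4)[OF j]] False by simp
  qed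
qed

lemma split0: "(\<Sum>i=0..(n::nat). f i) = f 0 + (\<Sum>i=1..n. (f i :: real))"
proof -
  have "{0..n} = insert 0 {1..n}" by auto
  then show ?thesis by simp
qed

lemma card_ideals: "card (order_ideals Pc le) = a + d + 4"
proof -
  have "real (card (order_ideals Pc le)) = (\<Sum>I\<in>order_ideals Pc le. 1)" by simp
  also have "\<dots> = real (a + d + 4)" unfolding sum_ideals[OF a d] by simp
  finally show ?thesis by linarith
qed

lemma uni_part: "expect Pc le (uni Pc le) (ddeg Pc le) = 1"
proof -
  have "expect Pc le (uni Pc le) (ddeg Pc le) = (\<Sum>I\<in>order_ideals Pc le. ddeg Pc le I / real (a + d + 4))"
    unfolding expect_def uni_def card_ideals by (intro sum.cong) auto
  also have "\<dots> = (\<Sum>I\<in>order_ideals Pc le. ddeg Pc le I) / real (a + d + 4)"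
    by (simp add: sum_divide_distrib)
  also have "(\<Sum>I\<in>order_ideals Pc le. ddeg Pc le I) = real (a + d + 4)"
  proof -
    have "(\<Sum>I\<in>order_ideals Pc le. ddeg Pc le I) =
      (\<Sum>k=0..a. ddeg Pc le (Ws k)) + 1 + 1 + (\<Sum>j=0..d. ddeg Pc le (Ds a j))"
      unfolding sum_ideals[OF a d] dd by simp
    also have "(\<Sum>k=0..a. ddeg Pc le (Ws k)) = (\<Sum>k=0..a. (if k = 0 then 0 else 1))"
      by (intro sum.cong) (auto simp: dd)
    also have "(\<Sum>j=0..d. ddeg Pc le (Ds a j)) = (\<Sum>j=0..d. (if j = 0 then 2 else 1))"
      by (intro sum.cong) (auto simp: dd)
    finally show ?thesis unfolding split0 by simp
  qed
  finally show ?thesis by simp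
qed

lemma tcde_part:
  assumes dist: "is_distribution Pc le \<mu>" and ts: "toggle_symmetric Pc le \<mu>"
  shows "expect Pc le \<mu> (ddeg Pc le) = 1"
proof -
  define m where "m k = \<mu> (Ws k)" for k
  define n where "n j = \<mu> (Ds a j)" for j
  have mass: "(\<Sum>k=0..a. m k) + \<mu> (Bx a) + \<mu> (By a) + (\<Sum>j=0..d. n j) = 1"
    using dist unfolding is_distribution_def sum_ideals[OF a d] m_def n_def by simp
  have Edd: "expect Pc le \<mu> (ddeg Pc le) = (\<Sum>k=1..a. m k) + \<mu> (Bx a) + \<mu> (By a) + 2 * n 0 + (\<Sum>j=1..d. n j)"
  proof -
    have "expect Pc le \<mu> (ddeg Pc le) = (\<Sum>k=0..a. m k * (if k = 0 then 0 else 1)) + \<mu> (Bx a) + \<mu> (By a)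
       + (\<Sum>j=0..d. n j * (if j = 0 then 2 else 1))"
      unfolding expect_def sum_ideals[OF a d] m_def n_def
      by (simp add: dd)
    then show ?thesis unfolding split0 by simp
  qed
  have step: "m (k - 1) = m k" if k: "1 \<le> k" "k \<le> a" for k
  proof -
    have "W k \<in> Pc" using k by simp
    then have e: "expect Pc le \<mu> (toggle_plus Pc le (W k)) = expect Pc le \<mu> (toggle_minus Pc le (W k))"
      using ts unfolding toggle_symmetric_def by blast
    have s1: "(\<Sum>i=0..a. \<mu> (Ws i) * toggle_plus Pc le (W k) (Ws i)) = m (k - 1)"
    proof -
      have "(\<Sum>i=0..a. \<mu> (Ws i) * toggle_plus Pc le (W k) (Ws i)) = (\<Sum>i=0..a. (if i = k - 1 then m i else 0))"
        by (rule sum.cong) (auto simp: tpW(1)[OF k] m_def)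
      also have "\<dots> = m (k - 1)"
      proof -
        have "k - 1 \<in> {0..a}" using k by simp
        then show ?thesis using sum.delta[of "{0..a}" "k - 1" m] by (simp only: finite_atLeastAtMost if_True)
      qed
      finally show ?thesis .
    qed
    have 1: "expect Pc le \<mu> (toggle_plus Pc le (W k)) = m (k - 1)"
      unfolding expect_def sum_ideals[OF a d] using s1 by (simp add: tpW[OF k])
    have s2: "(\<Sum>i=0..a. \<mu> (Ws i) * toggle_minus Pc le (W k) (Ws i)) = m k"
    proof -
      have "(\<Sum>i=0..a. \<mu> (Ws i) * toggle_minus Pc le (W k) (Ws i)) = (\<Sum>i=0..a. (if i = k then m i else 0))"
        by (rule sum.cong) (auto simp: tmW(1)[OF k] m_def)
      also have "\<dots> = m k" using k by (simp add: sum.delta)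
      finally show ?thesis .
    qed
    have "expect Pc le \<mu> (toggle_minus Pc le (W k)) = m k"
      unfolding expect_def sum_ideals[OF a d] using s2 by (simp add: tmW[OF k])
    then show ?thesis using 1 e by simp
  qed
  have chain: "k \<le> a \<Longrightarrow> m k = m 0" for k
  proof (induction k)
    case 0 then show ?case by simp
  next
    case (Suc k) then show ?case using step[of "Suc k"] by simp
  qed
  have "X \<in> Pc" "Y \<in> Pc" by simp_all
  then have eX: "expect Pc le \<mu> (toggle_plus Pc le X) = expect Pc le \<mu> (toggle_minus Pc le X)"
    and eY: "expect Pc le \<mu> (toggle_plus Pc le Y) = expect Pc le \<mu> (toggle_minus Pc le Y)"
    using ts unfolding toggle_symmetric_def by blast+
  have sX: "(\<Sum>k=0..a. \<mu> (Ws k) * toggle_plus Pc le X (Ws k)) = m a"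
  proof -
    have "(\<Sum>k=0..a. \<mu> (Ws k) * toggle_plus Pc le X (Ws k)) = (\<Sum>k=0..a. (if k = a then m k else 0))"
      by (rule sum.cong) (auto simp: tpX(1) m_def)
    also have "\<dots> = m a" by (simp add: sum.delta)
    finally show ?thesis .
  qed
  have pX: "expect Pc le \<mu> (toggle_plus Pc le X) = m a + \<mu> (By a)"
    unfolding expect_def sum_ideals[OF a d] using sX by (simp add: tpX)
  have tX: "(\<Sum>j=0..d. \<mu> (Ds a j) * toggle_minus Pc le X (Ds a j)) = n 0"
  proof -
    have "(\<Sum>j=0..d. \<mu> (Ds a j) * toggle_minus Pc le X (Ds a j)) = (\<Sum>j=0..d. (if j = 0 then n j else 0))"
      by (rule sum.cong) (auto simp: tmX(4) n_def)
    also have "\<dots> = n 0" by (simp add: sum.delta)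
    finally show ?thesis .
  qed
  have mX: "expect Pc le \<mu> (toggle_minus Pc le X) = \<mu> (Bx a) + n 0"
    unfolding expect_def sum_ideals[OF a d] using tX by (simp add: tmX)
  have sY: "(\<Sum>k=0..a. \<mu> (Ws k) * toggle_plus Pc le Y (Ws k)) = m a"
  proof -
    have "(\<Sum>k=0..a. \<mu> (Ws k) * toggle_plus Pc le Y (Ws k)) = (\<Sum>k=0..a. (if k = a then m k else 0))"
      by (rule sum.cong) (auto simp: tpX(5) m_def)
    also have "\<dots> = m a" by (simp add: sum.delta)
    finally show ?thesis .
  qed
  have pY: "expect Pc le \<mu> (toggle_plus Pc le Y) = m a + \<mu> (Bx a)"
    unfolding expect_def sum_ideals[OF a d] using sY by (simp add: tpX)
  have tY: "(\<Sum>j=0..d. \<mu> (Ds a j) * toggle_minus Pc le Y (Ds a j)) = n 0"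
  proof -
    have "(\<Sum>j=0..d. \<mu> (Ds a j) * toggle_minus Pc le Y (Ds a j)) = (\<Sum>j=0..d. (if j = 0 then n j else 0))"
      by (rule sum.cong) (auto simp: tmX(8) n_def)
    also have "\<dots> = n 0" by (simp add: sum.delta)
    finally show ?thesis .
  qed
  have mY: "expect Pc le \<mu> (toggle_minus Pc le Y) = \<mu> (By a) + n 0"
    unfolding expect_def sum_ideals[OF a d] using tY by (simp add: tmX)
  have "n 0 = m 0" using eX eY pX mX pY mY chain[of a] by simp
  then show ?thesis using Edd mass unfolding split0 by simp
qed

end

theorem proposition6p1:
  fixes a d :: nat
  assumes "a \<ge> 1" and "d \<ge> 1"
  shows "tCDE (P_carrier a d) (P_le a d) \<and>
         expect (P_carrier a d) (P_le a d) (uni (P_carrier a d) (P_le a d))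
                (ddeg (P_carrier a d) (P_le a d)) = 1"
  using tcde_part[OF assms] uni_part[OF assms] unfolding tCDE_def by simp


end
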